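(* Let $\rho$ be a function quasi-norm over a $\sigma$-finite measure space $(\Omega,\Sigma,\mu)$ and let $f\in L_0^+(\mu)$ with $\rho(f)<\infty$. Then $f$ is dominating if and only if $\lim_n\rho(f\chi_{A_n})=0$ for every non-increasing sequence $(A_n)$ in $\Sigma$ with $\bigcap_nA_n=\emptyset$.
   Context: $L_0^+(\mu)$: measurable functions $\Omega\to[0,\infty]$ modulo a.e. equality. A function quasi-norm is $\rho\colon L_0^+(\mu)\to[0,\infty]$ with (F1) $\rho(tf)=t\rho(f)$, $t\ge0$; (F2) $f\le g$ a.e. $\Rightarrow\rho(f)\le\rho(g)$; (F3) $\rho(\chi_E)<\infty$ if $\mu(E)<\infty$; (F4) for all $E$ with $\mu(E)<\infty$ and $\varepsilon>0$ there is $\delta>0$ with $\mu(A)\le\varepsilon$ whenever $A\subseteq E$ measurable and $\rho(\chi_A)\le\delta$; (F5) $\rho(f+g)\le\kappa(\rho(f)+\rho(g))$. $f$ (with $\rho(f)<\infty$) is dominating if $\lim_n\rho(f_n)=0$ for every non-increasing sequence $(f_n)$ in $L_0^+(\mu)$ with $f_1\le f$ and $\lim_nf_n=0$. *)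

theory Defs
  imports "HOL-Analysis.Analysis"
begin

text \<open>Elements of L_0^+(mu) are represented by measurable functions into [0,infinity]
  (type ennreal); a function quasi-norm is a map on such functions that is
  invariant under a.e. equality (so it is well defined on classes).\<close>

definition function_quasi_norm ::
  "'a measure \<Rightarrow> (('a \<Rightarrow> ennreal) \<Rightarrow> ennreal) \<Rightarrow> bool" where
  "function_quasi_norm M \<rho> \<longleftrightarrow>
     \<comment> \<open>well defined modulo a.e. equality\<close>
     (\<forall>f g. f \<in> borel_measurable M \<longrightarrow> g \<in> borel_measurable M \<longrightarrow>
        (AE x in M. f x = g x) \<longrightarrow> \<rho> f = \<rho> g) \<and>
     \<comment> \<open>(F1)\<close>
     (\<forall>f (t::real). f \<in> borel_measurable M \<longrightarrow> t \<ge> 0 \<longrightarrow>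
        \<rho> (\<lambda>x. ennreal t * f x) = ennreal t * \<rho> f) \<and>
     \<comment> \<open>(F2)\<close>
     (\<forall>f g. f \<in> borel_measurable M \<longrightarrow> g \<in> borel_measurable M \<longrightarrow>
        (AE x in M. f x \<le> g x) \<longrightarrow> \<rho> f \<le> \<rho> g) \<and>
     \<comment> \<open>(F3)\<close>
     (\<forall>E \<in> sets M. emeasure M E < \<infinity> \<longrightarrow> \<rho> (indicator E) < \<infinity>) \<and>
     \<comment> \<open>(F4)\<close>
     (\<forall>E \<in> sets M. emeasure M E < \<infinity> \<longrightarrow>
        (\<forall>\<epsilon>::real. \<epsilon> > 0 \<longrightarrow> (\<exists>\<delta>::real. \<delta> > 0 \<and>
          (\<forall>A \<in> sets M. A \<subseteq> E \<longrightarrow> \<rho> (indicator A) \<le> ennreal \<delta> \<longrightarrow>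
              emeasure M A \<le> ennreal \<epsilon>)))) \<and>
     \<comment> \<open>(F5)\<close>
     (\<exists>\<kappa>::real. \<forall>f g. f \<in> borel_measurable M \<longrightarrow> g \<in> borel_measurable M \<longrightarrow>
        \<rho> (\<lambda>x. f x + g x) \<le> ennreal \<kappa> * (\<rho> f + \<rho> g))"

definition dominating ::
  "'a measure \<Rightarrow> (('a \<Rightarrow> ennreal) \<Rightarrow> ennreal) \<Rightarrow> ('a \<Rightarrow> ennreal) \<Rightarrow> bool" where
  "dominating M \<rho> f \<longleftrightarrow> \<rho> f < \<infinity> \<and>
     (\<forall>F :: nat \<Rightarrow> 'a \<Rightarrow> ennreal.
        (\<forall>n. F n \<in> borel_measurable M) \<longrightarrow>
        (\<forall>n. AE x in M. F (Suc n) x \<le> F n x) \<longrightarrow>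
        (AE x in M. F 0 x \<le> f x) \<longrightarrow>
        (AE x in M. (\<lambda>n. F n x) \<longlonglongrightarrow> 0) \<longrightarrow>
        (\<lambda>n. \<rho> (F n)) \<longlonglongrightarrow> 0)"

end

theory Submission
  imports Defs
begin

lemma tendsto0_ennreal_by_real:
  fixes g :: "nat \<Rightarrow> ennreal"
  assumes "\<And>r. r > 0 \<Longrightarrow> eventually (\<lambda>n. g n < ennreal r) sequentially"
  shows "g \<longlonglongrightarrow> 0"
proof (rule order_tendstoI)
  fix a :: ennreal assume "a < 0" then show "eventually (\<lambda>n. a < g n) sequentially" by simp
next
  fix a :: ennreal assume a: "0 < a"
  obtain b where b: "0 < b" "b < a" "b < 1" using a
    by (metis dense min_less_iff_conj zero_less_one)
  then obtain r where r: "b = ennreal r" "r \<ge> 0"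
    by (metis ennreal_cases ennreal_less_top ennreal_one_less_top less_trans top.not_eq_extremum)
  then have "r > 0" using b by auto
  from assms[OF this] show "eventually (\<lambda>n. g n < a) sequentially"
    by (rule eventually_mono) (use b r in auto)
qed

theorem proposition3p22:
  fixes M :: "'a measure" and \<rho> :: "('a \<Rightarrow> ennreal) \<Rightarrow> ennreal" and f :: "'a \<Rightarrow> ennreal"
  assumes "sigma_finite_measure M"
    and "function_quasi_norm M \<rho>"
    and "f \<in> borel_measurable M"
    and "\<rho> f < \<infinity>"
  shows "dominating M \<rho> f \<longleftrightarrow>
    (\<forall>A :: nat \<Rightarrow> 'a set. (\<forall>n. A n \<in> sets M) \<longrightarrow> decseq A \<longrightarrow> (\<Inter>n. A n) = {} \<longrightarrow>
       (\<lambda>n. \<rho> (\<lambda>x. f x * indicator (A n) x)) \<longlonglongrightarrow> 0)"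
proof
  assume dom: "dominating M \<rho> f"
  show "\<forall>A :: nat \<Rightarrow> 'a set. (\<forall>n. A n \<in> sets M) \<longrightarrow> decseq A \<longrightarrow> (\<Inter>n. A n) = {} \<longrightarrow>
       (\<lambda>n. \<rho> (\<lambda>x. f x * indicator (A n) x)) \<longlonglongrightarrow> 0"
  proof (intro allI impI)
    fix A :: "nat \<Rightarrow> 'a set"
    assume A: "\<forall>n. A n \<in> sets M" "decseq A" "(\<Inter>n. A n) = {}"
    define F where "F = (\<lambda>n x. f x * indicator (A n) x)"
    have m: "\<forall>n. F n \<in> borel_measurable M" unfolding F_def using A(1) assms(3) by auto
    have d: "\<forall>n. AE x in M. F (Suc n) x \<le> F n x"
    proof (intro allI AE_I2)
      fix n x
      have "A (Suc n) \<subseteq> A n" using A(2) by (simp add: decseq_Suc_iff)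
      then have "indicator (A (Suc n)) x \<le> (indicator (A n) x :: ennreal)"
        by (auto split: split_indicator)
      then show "F (Suc n) x \<le> F n x" unfolding F_def by (simp add: mult_left_mono)
    qed
    have z: "AE x in M. F 0 x \<le> f x" unfolding F_def by (auto split: split_indicator)
    have l: "AE x in M. (\<lambda>n. F n x) \<longlonglongrightarrow> 0"
    proof (intro AE_I2)
      fix x
      obtain n where "x \<notin> A n" using A(3) by auto
      then have "\<forall>m\<ge>n. x \<notin> A m" using A(2) by (auto simp: decseq_def)
      then have "eventually (\<lambda>m. F m x = 0) sequentially"
        unfolding F_def eventually_sequentially by (auto simp: indicator_def)
      then show "(\<lambda>n. F n x) \<longlonglongrightarrow> 0" by (rule tendsto_eventually)
    qed
    show "(\<lambda>n. \<rho> (\<lambda>x. f x * indicator (A n) x)) \<longlonglongrightarrow> 0"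
    proof -
      have "(\<lambda>n. \<rho> (F n)) \<longlonglongrightarrow> 0"
        using dom m d z l unfolding dominating_def by blast
      then show ?thesis by (simp add: F_def)
    qed
  qed
next
  assume H: "\<forall>A :: nat \<Rightarrow> 'a set. (\<forall>n. A n \<in> sets M) \<longrightarrow> decseq A \<longrightarrow> (\<Inter>n. A n) = {} \<longrightarrow>
       (\<lambda>n. \<rho> (\<lambda>x. f x * indicator (A n) x)) \<longlonglongrightarrow> 0"
  note Q = assms(2)[unfolded function_quasi_norm_def]
  have F1: "\<And>g t. g \<in> borel_measurable M \<Longrightarrow> t \<ge> 0 \<Longrightarrow> \<rho> (\<lambda>x. ennreal t * g x) = ennreal t * \<rho> g"
    using Q[THEN conjunct2, THEN conjunct1] by blast
  have F2: "\<And>g h. g \<in> borel_measurable M \<Longrightarrow> h \<in> borel_measurable M \<Longrightarrow>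
        (AE x in M. g x \<le> h x) \<Longrightarrow> \<rho> g \<le> \<rho> h"
    using Q[THEN conjunct2, THEN conjunct2, THEN conjunct1] by blast
  have F3: "\<And>E. E \<in> sets M \<Longrightarrow> emeasure M E < \<infinity> \<Longrightarrow> \<rho> (indicator E) < \<infinity>"
    using Q[THEN conjunct2, THEN conjunct2, THEN conjunct2, THEN conjunct1] by blast
  obtain \<kappa> :: real where k0: "\<And>g h. g \<in> borel_measurable M \<Longrightarrow> h \<in> borel_measurable M \<Longrightarrow>
        \<rho> (\<lambda>x. g x + h x) \<le> ennreal \<kappa> * (\<rho> g + \<rho> h)"
    using Q[THEN conjunct2, THEN conjunct2, THEN conjunct2, THEN conjunct2, THEN conjunct2] by blast
  define K where "K = max \<kappa> 1"
  have K1: "K \<ge> 1" unfolding K_def by simp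
  have F5: "\<rho> (\<lambda>x. g x + h x) \<le> ennreal K * (\<rho> g + \<rho> h)"
    if "g \<in> borel_measurable M" "h \<in> borel_measurable M" for g h
  proof -
    have "ennreal \<kappa> \<le> ennreal K" unfolding K_def by (simp add: ennreal_leI)
    then have "ennreal \<kappa> * (\<rho> g + \<rho> h) \<le> ennreal K * (\<rho> g + \<rho> h)"
      by (simp add: mult_right_mono)
    then show ?thesis using k0[OF that] by (rule order_trans[rotated])
  qed
  obtain \<Omega> :: "nat \<Rightarrow> 'a set" where \<Omega>: "range \<Omega> \<subseteq> sets M" "(\<Union>i. \<Omega> i) = space M"
    "\<And>i. emeasure M (\<Omega> i) \<noteq> \<infinity>" "incseq \<Omega>"
    using sigma_finite_measure.sigma_finite_incseq[OF assms(1)] by blast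
  show "dominating M \<rho> f"
    unfolding dominating_def
  proof (intro conjI allI impI)
    show "\<rho> f < \<infinity>" by fact
    fix F :: "nat \<Rightarrow> 'a \<Rightarrow> ennreal"
    assume Fm: "\<forall>n. F n \<in> borel_measurable M"
      and Fd: "\<forall>n. AE x in M. F (Suc n) x \<le> F n x"
      and F0: "AE x in M. F 0 x \<le> f x"
      and Fl: "AE x in M. (\<lambda>n. F n x) \<longlonglongrightarrow> 0"
    have "AE x in M. (\<forall>n. F (Suc n) x \<le> F n x) \<and> F 0 x \<le> f x \<and> (\<lambda>n. F n x) \<longlonglongrightarrow> 0"
      using Fd F0 Fl by (simp add: AE_all_countable)
    then obtain N where N: "{x \<in> space M. \<not> ((\<forall>n. F (Suc n) x \<le> F n x) \<and> F 0 x \<le> f x \<and> (\<lambda>n. F n x) \<longlonglongrightarrow> 0)} \<subseteq> N"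
      "emeasure M N = 0" "N \<in> sets M"
      by (rule AE_E)
    have Nnull: "N \<in> null_sets M" using N by auto
    have good: "(\<forall>n. F (Suc n) x \<le> F n x) \<and> F 0 x \<le> f x \<and> (\<lambda>n. F n x) \<longlonglongrightarrow> 0"
      if "x \<in> space M" "x \<notin> N" for x using N(1) that by blast
    have leF: "F m x \<le> f x" if "x \<in> space M" "x \<notin> N" for m x
    proof -
      have "decseq (\<lambda>n. F n x)" using good[OF that] by (simp add: decseq_Suc_iff)
      then have "F m x \<le> F 0 x" by (simp add: decseq_def)
      then show ?thesis using good[OF that] by auto
    qed
    show "(\<lambda>n. \<rho> (F n)) \<longlonglongrightarrow> 0"
    proof (rule tendsto0_ennreal_by_real)
      fix r :: real assume r: "r > 0"
      define \<epsilon> where "\<epsilon> = r / (4 * K * K)"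
      have \<epsilon>0: "\<epsilon> > 0" unfolding \<epsilon>_def using r K1 by auto
      have key: "K * (\<epsilon> + K * (\<epsilon> + \<epsilon>)) < r"
      proof -
        have "K * (\<epsilon> + K * (\<epsilon> + \<epsilon>)) \<le> K * (K * \<epsilon> + K * (\<epsilon> + \<epsilon>))"
          using K1 \<epsilon>0 by (intro mult_left_mono) auto
        also have "\<dots> = 3 * (K * K * \<epsilon>)" by (simp add: algebra_simps)
        also have "K * K * \<epsilon> = r / 4" unfolding \<epsilon>_def using K1 by simp
        finally show ?thesis using r by simp
      qed
      define B where "B = (\<lambda>k. space M - \<Omega> k)"
      have Bs: "\<forall>k. B k \<in> sets M" unfolding B_def using \<Omega>(1) by auto
      have Bd: "decseq B" unfolding B_def using \<Omega>(4) by (auto simp: decseq_def incseq_def)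
      have Bi: "(\<Inter>k. B k) = {}" unfolding B_def using \<Omega>(2) by auto
      have "(\<lambda>k. \<rho> (\<lambda>x. f x * indicator (B k) x)) \<longlonglongrightarrow> 0" using H Bs Bd Bi by blast
      then have "eventually (\<lambda>k. \<rho> (\<lambda>x. f x * indicator (B k) x) < ennreal \<epsilon>) sequentially"
        using \<epsilon>0 by (intro order_tendstoD(2)) auto
      then obtain k where k: "\<rho> (\<lambda>x. f x * indicator (B k) x) < ennreal \<epsilon>"
        unfolding eventually_sequentially by (blast intro: order_refl)
      have "\<rho> (indicator (\<Omega> k)) < \<infinity>" using F3 \<Omega>(1,3) by (simp add: top.not_eq_extremum)
      then obtain c where c: "\<rho> (indicator (\<Omega> k)) = ennreal c" "c \<ge> 0"
        by (cases "\<rho> (indicator (\<Omega> k))") auto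
      define \<delta> where "\<delta> = \<epsilon> / (c + 1)"
      have \<delta>0: "\<delta> > 0" unfolding \<delta>_def using \<epsilon>0 c by auto
      have \<delta>c: "\<delta> * c < \<epsilon>"
      proof -
        have "\<delta> * c = \<epsilon> * (c / (c + 1))" unfolding \<delta>_def by simp
        also have "\<dots> < \<epsilon> * 1" using \<epsilon>0 c by (intro mult_strict_left_mono) auto
        finally show ?thesis by simp
      qed
      have t1: "\<rho> (\<lambda>x. ennreal \<delta> * indicator (\<Omega> k) x) < ennreal \<epsilon>"
      proof -
        have "\<rho> (\<lambda>x. ennreal \<delta> * indicator (\<Omega> k) x) = ennreal \<delta> * \<rho> (indicator (\<Omega> k))"
          using F1[of "indicator (\<Omega> k)" \<delta>] \<Omega>(1) \<delta>0 by auto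
        also have "\<dots> = ennreal (\<delta> * c)" using c \<delta>0 by (simp add: ennreal_mult)
        also have "\<dots> < ennreal \<epsilon>" using \<delta>c \<epsilon>0 by (simp add: ennreal_lessI)
        finally show ?thesis .
      qed
      define D where "D = (\<lambda>m. {x \<in> space M. ennreal \<delta> < F m x} - N)"
      have Ds: "\<forall>m. D m \<in> sets M"
      proof
        fix m
        have fm[measurable]: "F m \<in> borel_measurable M" using Fm by auto
        have "{x \<in> space M. ennreal \<delta> < F m x} \<in> sets M" by measurable
        then show "D m \<in> sets M" unfolding D_def using N(3) by auto
      qed
      have Dd: "decseq D"
      proof (rule decseq_SucI)
        fix m show "D (Suc m) \<subseteq> D m"
          unfolding D_def using good by (force intro: less_le_trans)
      qed
      have Di: "(\<Inter>m. D m) = {}"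
      proof (rule ccontr)
        assume "(\<Inter>m. D m) \<noteq> {}"
        then obtain x where x: "\<forall>m. x \<in> D m" by auto
        then have xs: "x \<in> space M" "x \<notin> N" unfolding D_def by auto
        have "eventually (\<lambda>m. F m x < ennreal \<delta>) sequentially"
          using good[OF xs] \<delta>0 by (intro order_tendstoD(2)) auto
        then obtain m where "F m x < ennreal \<delta>" unfolding eventually_sequentially by (blast intro: order_refl)
        moreover have "ennreal \<delta> < F m x" using x unfolding D_def by auto
        ultimately show False by auto
      qed
      have "(\<lambda>m. \<rho> (\<lambda>x. f x * indicator (D m) x)) \<longlonglongrightarrow> 0" using H Ds Dd Di by blast
      then have ev: "eventually (\<lambda>m. \<rho> (\<lambda>x. f x * indicator (D m) x) < ennreal \<epsilon>) sequentially"
        using \<epsilon>0 by (intro order_tendstoD(2)) auto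
      show "eventually (\<lambda>m. \<rho> (F m) < ennreal r) sequentially"
      proof (rule eventually_mono[OF ev])
        fix m assume m: "\<rho> (\<lambda>x. f x * indicator (D m) x) < ennreal \<epsilon>"
        have meas1: "(\<lambda>x. ennreal \<delta> * indicator (\<Omega> k) x) \<in> borel_measurable M"
          using \<Omega>(1) by auto
        have meas2: "(\<lambda>x. f x * indicator (D m) x) \<in> borel_measurable M"
          using Ds assms(3) by auto
        have meas3: "(\<lambda>x. f x * indicator (B k) x) \<in> borel_measurable M"
          using Bs assms(3) by auto
        have pt: "AE x in M. F m x \<le> ennreal \<delta> * indicator (\<Omega> k) x +
            (f x * indicator (D m) x + f x * indicator (B k) x)"
        proof (rule AE_I'[OF Nnull])
          show "{x \<in> space M. \<not> F m x \<le> ennreal \<delta> * indicator (\<Omega> k) x +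
            (f x * indicator (D m) x + f x * indicator (B k) x)} \<subseteq> N"
          proof (rule subsetI, rule ccontr)
            fix x assume x: "x \<in> {x \<in> space M. \<not> F m x \<le> ennreal \<delta> * indicator (\<Omega> k) x +
              (f x * indicator (D m) x + f x * indicator (B k) x)}" and xN: "x \<notin> N"
            have xs: "x \<in> space M" using x by auto
            have nle: "\<not> F m x \<le> ennreal \<delta> * indicator (\<Omega> k) x +
              (f x * indicator (D m) x + f x * indicator (B k) x)" using x by auto
            show False
            proof (cases "x \<in> \<Omega> k")
              case True
              show False
              proof (cases "F m x \<le> ennreal \<delta>")
                case True2: True
                have "F m x \<le> ennreal \<delta> * indicator (\<Omega> k) x" using True True2 by simp
                also have "\<dots> \<le> ennreal \<delta> * indicator (\<Omega> k) x +
                  (f x * indicator (D m) x + f x * indicator (B k) x)" by simp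
                finally show False using nle by simp
              next
                case False
                then have "x \<in> D m" unfolding D_def using xs xN by auto
                then have "F m x \<le> f x * indicator (D m) x" using leF[OF xs xN] by simp
                also have "\<dots> \<le> ennreal \<delta> * indicator (\<Omega> k) x +
                  (f x * indicator (D m) x + f x * indicator (B k) x)"
                  by (simp add: add.assoc add_increasing)
                finally show False using nle by simp
              qed
            next
              case False
              then have "x \<in> B k" unfolding B_def using xs by auto
              then have "F m x \<le> f x * indicator (B k) x" using leF[OF xs xN] by simp
              also have "\<dots> \<le> ennreal \<delta> * indicator (\<Omega> k) x +
                (f x * indicator (D m) x + f x * indicator (B k) x)"
                by (simp add: add_increasing)
              finally show False using nle by simp
            qed
          qed
        qed
        have "\<rho> (F m) \<le> \<rho> (\<lambda>x. ennreal \<delta> * indicator (\<Omega> k) x +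
            (f x * indicator (D m) x + f x * indicator (B k) x))"
          using F2[OF _ _ pt] Fm meas1 meas2 meas3 by auto
        also have "\<dots> \<le> ennreal K * (\<rho> (\<lambda>x. ennreal \<delta> * indicator (\<Omega> k) x) +
            \<rho> (\<lambda>x. f x * indicator (D m) x + f x * indicator (B k) x))"
          using F5[OF meas1, of "\<lambda>x. f x * indicator (D m) x + f x * indicator (B k) x"]
            meas2 meas3 by auto
        also have "\<dots> \<le> ennreal K * (\<rho> (\<lambda>x. ennreal \<delta> * indicator (\<Omega> k) x) +
            ennreal K * (\<rho> (\<lambda>x. f x * indicator (D m) x) + \<rho> (\<lambda>x. f x * indicator (B k) x)))"
          using F5[OF meas2 meas3] by (intro mult_left_mono add_left_mono) auto
        also have "\<dots> \<le> ennreal K * (ennreal \<epsilon> + ennreal K * (ennreal \<epsilon> + ennreal \<epsilon>))"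
          using t1 m k by (intro mult_left_mono add_mono) auto
        also have "\<dots> = ennreal (K * (\<epsilon> + K * (\<epsilon> + \<epsilon>)))"
        proof -
          have e1: "ennreal \<epsilon> + ennreal \<epsilon> = ennreal (\<epsilon> + \<epsilon>)"
            using \<epsilon>0 by (intro ennreal_plus[symmetric]) auto
          have e2: "ennreal K * ennreal (\<epsilon> + \<epsilon>) = ennreal (K * (\<epsilon> + \<epsilon>))"
            using \<epsilon>0 K1 by (intro ennreal_mult[symmetric]) auto
          have e3: "ennreal \<epsilon> + ennreal (K * (\<epsilon> + \<epsilon>)) = ennreal (\<epsilon> + K * (\<epsilon> + \<epsilon>))"
            using \<epsilon>0 K1 by (intro ennreal_plus[symmetric]) auto
          have e4: "ennreal K * ennreal (\<epsilon> + K * (\<epsilon> + \<epsilon>)) = ennreal (K * (\<epsilon> + K * (\<epsilon> + \<epsilon>)))"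
            using \<epsilon>0 K1 by (intro ennreal_mult[symmetric]) auto
          show ?thesis by (simp only: e1 e2 e3 e4)
        qed
        also have "\<dots> < ennreal r" using key r by (simp add: ennreal_lessI)
        finally show "\<rho> (F m) < ennreal r" .
      qed
    qed
  qed
qed

end
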